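(* Let $A\in\mathbb{R}^{n\times n}$, $B\in\mathbb{R}^{n\times m}$, symmetric $Q\succeq 0$, symmetric $R\succ 0$, $Q_f\succ 0$, and a horizon $t_f\in\mathbb{N}$. For a binary switching signal $\sigma$, define $P_\sigma(t)$ for $t=t_f,t_f-1,\ldots,0$ by $P_\sigma(t_f)=Q_f$ and $P_\sigma(t)=Q+A^{\mathsf T}P_\sigma(t+1)A-\sigma(t)A^{\mathsf T}P_\sigma(t+1)B\,(R+B^{\mathsf T}P_\sigma(t+1)B)^{-1}B^{\mathsf T}P_\sigma(t+1)A$. If $\sigma_1\preceq\sigma_2$, then $P_{\sigma_1}(0)\succeq P_{\sigma_2}(0)$ (in the positive semidefinite order).
   Context: $P_\sigma(0)$ gives the optimal finite-horizon LQR cost $x_0^{\mathsf T}P_\sigma(0)x_0$ for the time-varying system $x(t+1)=Ax(t)+\sigma(t)Bu(t)$ with cost $x(t_f)^{\mathsf T}Q_fx(t_f)+\sum_{t<t_f}(x(t)^{\mathsf T}Qx(t)+u(t)^{\mathsf T}Ru(t))$. Partial order on binary signals: $\sigma_1\preceq\sigma_2$ if for every $i$ with $\sigma_1(i)=1$ we also have $\sigma_2(i)=1$. *)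

theory Defs
  imports "HOL-Analysis.Analysis"
begin

definition psd :: "real^'n^'n \<Rightarrow> bool" where
  "psd M \<longleftrightarrow> transpose M = M \<and> (\<forall>x. 0 \<le> x \<bullet> (M *v x))"

definition pd :: "real^'n^'n \<Rightarrow> bool" where
  "pd M \<longleftrightarrow> transpose M = M \<and> (\<forall>x. x \<noteq> 0 \<longrightarrow> 0 < x \<bullet> (M *v x))"

definition loewner_ge :: "real^'n^'n \<Rightarrow> real^'n^'n \<Rightarrow> bool" where
  "loewner_ge M N \<longleftrightarrow> psd (M - N)"

definition sig_le :: "(nat \<Rightarrow> bool) \<Rightarrow> (nat \<Rightarrow> bool) \<Rightarrow> bool" where
  "sig_le s1 s2 \<longleftrightarrow> (\<forall>i. s1 i \<longrightarrow> s2 i)"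

text \<open>Backward Riccati recursion, indexed by the number k of steps from the horizon:
  riccati_back ... k = P_sigma(tf - k).\<close>
fun riccati_back :: "real^'n^'n \<Rightarrow> real^'m^'n \<Rightarrow> real^'n^'n \<Rightarrow> real^'m^'m \<Rightarrow> real^'n^'n
    \<Rightarrow> (nat \<Rightarrow> bool) \<Rightarrow> nat \<Rightarrow> nat \<Rightarrow> real^'n^'n" where
  "riccati_back A B Q R Qf \<sigma> tf 0 = Qf"
| "riccati_back A B Q R Qf \<sigma> tf (Suc k) =
     (let P = riccati_back A B Q R Qf \<sigma> tf k; t = tf - Suc k in
      Q + transpose A ** P ** A
        - (of_bool (\<sigma> t) :: real) *\<^sub>R
            (transpose A ** P ** B ** matrix_inv (R + transpose B ** P ** B) ** transpose B ** P ** A))"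

definition P_sig :: "real^'n^'n \<Rightarrow> real^'m^'n \<Rightarrow> real^'n^'n \<Rightarrow> real^'m^'m \<Rightarrow> real^'n^'n
    \<Rightarrow> (nat \<Rightarrow> bool) \<Rightarrow> nat \<Rightarrow> nat \<Rightarrow> real^'n^'n" where
  "P_sig A B Q R Qf \<sigma> tf t = riccati_back A B Q R Qf \<sigma> tf (tf - t)"

end

theory Submission imports Defs begin

lemma minv:
  fixes M :: "real^'m^'m"
  assumes "invertible M"
  shows "M ** matrix_inv M = mat 1" "matrix_inv M ** M = mat 1"
  using someI_ex[OF assms[unfolded invertible_def]] unfolding matrix_inv_def by auto

lemma minv_sym:
  fixes M :: "real^'m^'m"
  assumes "invertible M" "transpose M = M"
  shows "transpose (matrix_inv M) = matrix_inv M"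
proof -
  let ?K = "matrix_inv M"
  have "transpose (M ** ?K) = mat 1" using minv(1)[OF assms(1)] by (simp add: transpose_mat)
  hence L: "transpose ?K ** M = mat 1" using assms(2) by (simp add: matrix_transpose_mul)
  have "transpose ?K = transpose ?K ** (M ** ?K)" using minv(1)[OF assms(1)] by simp
  also have "\<dots> = (transpose ?K ** M) ** ?K" by (simp add: matrix_mul_assoc)
  also have "\<dots> = ?K" using L by simp
  finally show ?thesis .
qed

lemma pd_invertible:
  fixes M :: "real^'m^'m"
  assumes "pd M" shows "invertible M"
proof -
  have "\<forall>x. M *v x = 0 \<longrightarrow> x = 0"
  proof (intro allI impI)
    fix x assume "M *v x = 0"
    then have "x \<bullet> (M *v x) = 0" by simp
    then show "x = 0" using assms unfolding pd_def by force
  qed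
  then show ?thesis unfolding invertible_left_inverse matrix_left_invertible_ker .
qed

lemma tr_inner: "(x::real^'n) \<bullet> (transpose A *v y) = (A *v x) \<bullet> y"
  by (metis dot_lmul_matrix inner_commute transpose_matrix_vector transpose_transpose)

lemma sym_inner: "transpose (P::real^'n^'n) = P \<Longrightarrow> x \<bullet> (P *v y) = (P *v x) \<bullet> y"
  by (metis tr_inner)

lemma tr_add: "transpose ((X::real^'n^'k) + Y) = transpose X + transpose Y"
  by (simp add: transpose_def vec_eq_iff)
lemma tr_diff: "transpose ((X::real^'n^'k) - Y) = transpose X - transpose Y"
  by (simp add: transpose_def vec_eq_iff)

declare transpose_matrix_vector[simp del]

lemma key_identity:
  fixes A :: "real^'n^'n" and B :: "real^'m^'n" and Q P :: "real^'n^'n" and R :: "real^'m^'m"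
    and x :: "real^'n" and u :: "real^'m"
  assumes symP: "transpose P = P" and symR: "transpose R = R"
    and inv: "invertible (R + transpose B ** P ** B)"
  defines "M \<equiv> R + transpose B ** P ** B"
  defines "K \<equiv> matrix_inv M"
  defines "v \<equiv> transpose B *v (P *v (A *v x))"
  shows "x \<bullet> ((Q + transpose A ** P ** A
            - transpose A ** P ** B ** K ** transpose B ** P ** A) *v x)
         + (u + K *v v) \<bullet> (M *v (u + K *v v))
       = x \<bullet> (Q *v x) + (A *v x + B *v u) \<bullet> (P *v (A *v x + B *v u)) + u \<bullet> (R *v u)"
proof -
  define a where "a = A *v x"
  define b where "b = B *v u"
  have symM: "transpose M = M" unfolding M_def
    by (simp add: matrix_transpose_mul symP symR tr_add matrix_mul_assoc)
  have MK: "M ** K = mat 1" using minv(1)[OF inv] unfolding K_def M_def .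
  have MKv: "M *v (K *v v) = v" by (simp add: matrix_vector_mul_assoc MK)
  have e1: "x \<bullet> ((transpose A ** P ** A) *v x) = a \<bullet> (P *v a)"
    by (simp add: a_def tr_inner flip: matrix_vector_mul_assoc)
  have e2: "x \<bullet> ((transpose A ** P ** B ** K ** transpose B ** P ** A) *v x) = v \<bullet> (K *v v)"
  proof -
    have "x \<bullet> ((transpose A ** P ** B ** K ** transpose B ** P ** A) *v x)
        = x \<bullet> (transpose A *v (P *v (B *v (K *v v))))"
      by (simp add: v_def flip: matrix_vector_mul_assoc)
    also have "\<dots> = a \<bullet> (P *v (B *v (K *v v)))" by (simp only: a_def tr_inner)
    also have "\<dots> = (P *v a) \<bullet> (B *v (K *v v))" by (rule sym_inner[OF symP])
    also have "\<dots> = (transpose B *v (P *v a)) \<bullet> (K *v v)"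
      by (metis tr_inner inner_commute)
    also have "\<dots> = v \<bullet> (K *v v)" by (simp only: v_def a_def)
    finally show ?thesis .
  qed
  have e3: "b \<bullet> (P *v a) = u \<bullet> v"
    unfolding b_def v_def a_def by (metis tr_inner inner_commute)
  have e4: "a \<bullet> (P *v b) = u \<bullet> v" using e3 sym_inner[OF symP, of a b] by (metis inner_commute)
  have e5: "b \<bullet> (P *v b) = u \<bullet> ((transpose B ** P ** B) *v u)"
    by (simp add: b_def tr_inner flip: matrix_vector_mul_assoc)
  have e6: "u \<bullet> (M *v u) = u \<bullet> (R *v u) + b \<bullet> (P *v b)"
    by (simp only: M_def e5 matrix_vector_mult_add_rdistrib inner_add_right)
  have e7: "(K *v v) \<bullet> (M *v u) = u \<bullet> v"
    using sym_inner[OF symM, of "K *v v" u] MKv by (metis inner_commute)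
  have e7': "u \<bullet> (M *v (K *v v)) = u \<bullet> v" by (simp only: MKv)
  have e7'': "(K *v v) \<bullet> (M *v (K *v v)) = v \<bullet> (K *v v)" by (metis MKv inner_commute)
  have e8: "(u + K *v v) \<bullet> (M *v (u + K *v v)) = u \<bullet> (M *v u) + 2 * (u \<bullet> v) + v \<bullet> (K *v v)"
    by (simp only: matrix_vector_right_distrib inner_add_left inner_add_right e7 e7' e7''; simp)
  have e9: "(a + b) \<bullet> (P *v (a + b)) = a \<bullet> (P *v a) + 2 * (u \<bullet> v) + b \<bullet> (P *v b)"
    by (simp only: matrix_vector_right_distrib inner_add_left inner_add_right e3 e4; simp)
  have e10: "x \<bullet> ((Q + transpose A ** P ** A
            - transpose A ** P ** B ** K ** transpose B ** P ** A) *v x)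
      = x \<bullet> (Q *v x) + a \<bullet> (P *v a) - v \<bullet> (K *v v)"
    by (simp only: matrix_vector_mult_add_rdistrib matrix_vector_mult_diff_rdistrib
        inner_add_right inner_diff_right e1 e2)
  show ?thesis
    unfolding e10 e8 a_def[symmetric] b_def[symmetric] e9 e6 by simp
qed

definition F0 :: "real^'n^'n \<Rightarrow> real^'n^'n \<Rightarrow> real^'n^'n \<Rightarrow> real^'n^'n" where
  "F0 A Q P = Q + transpose A ** P ** A"
definition F1 :: "real^'n^'n \<Rightarrow> real^'m^'n \<Rightarrow> real^'n^'n \<Rightarrow> real^'m^'m \<Rightarrow> real^'n^'n \<Rightarrow> real^'n^'n" where
  "F1 A B Q R P = Q + transpose A ** P ** A
     - transpose A ** P ** B ** matrix_inv (R + transpose B ** P ** B) ** transpose B ** P ** A"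
definition Jc :: "real^'n^'n \<Rightarrow> real^'m^'n \<Rightarrow> real^'n^'n \<Rightarrow> real^'m^'m \<Rightarrow> real^'n^'n \<Rightarrow> real^'n \<Rightarrow> real^'m \<Rightarrow> real" where
  "Jc A B Q R P x u = x \<bullet> (Q *v x) + (A *v x + B *v u) \<bullet> (P *v (A *v x + B *v u)) + u \<bullet> (R *v u)"

lemma pd_M:
  fixes B :: "real^'m^'n" and P :: "real^'n^'n" and R :: "real^'m^'m"
  assumes "psd P" "pd R"
  shows "pd (R + transpose B ** P ** B)"
  unfolding pd_def
proof (intro conjI allI impI)
  show "transpose (R + transpose B ** P ** B) = R + transpose B ** P ** B"
    using assms by (simp add: psd_def pd_def matrix_transpose_mul tr_add matrix_mul_assoc)
  fix x :: "real^'m" assume "x \<noteq> 0"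
  have "0 < x \<bullet> (R *v x)" using assms(2) \<open>x \<noteq> 0\<close> by (simp add: pd_def)
  moreover have "x \<bullet> ((transpose B ** P ** B) *v x) = (B *v x) \<bullet> (P *v (B *v x))"
    by (simp add: tr_inner flip: matrix_vector_mul_assoc)
  moreover have "0 \<le> (B *v x) \<bullet> (P *v (B *v x))" using assms(1) by (simp add: psd_def)
  ultimately show "0 < x \<bullet> ((R + transpose B ** P ** B) *v x)"
    by (simp add: matrix_vector_mult_add_rdistrib inner_add_right)
qed

lemma F1_le_J:
  assumes "psd P" "pd R"
  shows "x \<bullet> (F1 A B Q R P *v x) \<le> Jc A B Q R P x u"
proof -
  let ?M = "R + transpose B ** P ** B"
  have pdM: "pd ?M" by (rule pd_M[OF assms])
  have inv: "invertible ?M" by (rule pd_invertible[OF pdM])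
  let ?w = "u + matrix_inv ?M *v (transpose B *v (P *v (A *v x)))"
  have "0 \<le> ?w \<bullet> (?M *v ?w)" using pdM unfolding pd_def
    by (cases "?w = 0") (auto intro: less_imp_le)
  moreover have "x \<bullet> (F1 A B Q R P *v x) + ?w \<bullet> (?M *v ?w) = Jc A B Q R P x u"
    unfolding F1_def Jc_def
    by (rule key_identity) (use assms inv in \<open>auto simp: psd_def pd_def\<close>)
  ultimately show ?thesis by linarith
qed

lemma F1_eq_J:
  assumes "psd P" "pd R"
  shows "x \<bullet> (F1 A B Q R P *v x) = Jc A B Q R P x (- (matrix_inv (R + transpose B ** P ** B) *v (transpose B *v (P *v (A *v x)))))"
proof -
  let ?M = "R + transpose B ** P ** B"
  have inv: "invertible ?M" by (rule pd_invertible[OF pd_M[OF assms]])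
  let ?u = "- (matrix_inv ?M *v (transpose B *v (P *v (A *v x))))"
  have "x \<bullet> (F1 A B Q R P *v x) + (?u + matrix_inv ?M *v (transpose B *v (P *v (A *v x)))) \<bullet> (?M *v (?u + matrix_inv ?M *v (transpose B *v (P *v (A *v x))))) = Jc A B Q R P x ?u"
    unfolding F1_def Jc_def
    by (rule key_identity) (use assms inv in \<open>auto simp: psd_def pd_def\<close>)
  then show ?thesis by simp
qed

lemma Jc_nonneg:
  assumes "psd Q" "psd P" "pd R"
  shows "0 \<le> Jc A B Q R P x u"
proof -
  have "0 \<le> u \<bullet> (R *v u)" using assms(3) unfolding pd_def
    by (cases "u = 0") (auto intro: less_imp_le)
  then show ?thesis using assms(1,2) unfolding Jc_def psd_def
    by (metis add_nonneg_nonneg)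
qed

lemma F1_sym:
  assumes "psd Q" "psd P" "pd R"
  shows "transpose (F1 A B Q R P) = F1 A B Q R P"
proof -
  have inv: "invertible (R + transpose B ** P ** B)" by (rule pd_invertible[OF pd_M[OF assms(2,3)]])
  have sM: "transpose (R + transpose B ** P ** B) = R + transpose B ** P ** B"
    using pd_M[OF assms(2,3)] by (simp add: pd_def)
  have sK: "transpose (matrix_inv (R + transpose B ** P ** B)) = matrix_inv (R + transpose B ** P ** B)"
    by (rule minv_sym[OF inv sM])
  show ?thesis using assms sK unfolding F1_def psd_def
    by (simp add: tr_add tr_diff matrix_transpose_mul matrix_mul_assoc)
qed

lemma F1_psd:
  assumes "psd Q" "psd P" "pd R"
  shows "psd (F1 A B Q R P)"
  unfolding psd_def
  using F1_sym[OF assms] F1_le_J[OF assms(2,3)] Jc_nonneg[OF assms] F1_eq_J[OF assms(2,3)] by simp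

lemma F0_sym:
  assumes "psd Q" "psd P"
  shows "transpose (F0 A Q P) = F0 A Q P"
  using assms unfolding F0_def psd_def
  by (simp add: tr_add matrix_transpose_mul matrix_mul_assoc)

lemma F0_J: "x \<bullet> (F0 A Q P *v x) = Jc A B Q R P x 0"
  unfolding F0_def Jc_def
  by (simp add: matrix_vector_mult_add_rdistrib inner_add_right tr_inner flip: matrix_vector_mul_assoc)

lemma F0_ge_F1:
  assumes "psd Q" "psd P" "pd R"
  shows "loewner_ge (F0 A Q P) (F1 A B Q R P)"
  unfolding loewner_ge_def psd_def
proof (intro conjI allI)
  show "transpose (F0 A Q P - F1 A B Q R P) = F0 A Q P - F1 A B Q R P"
    using F0_sym[OF assms(1,2)] F1_sym[OF assms] by (simp add: tr_diff)
  fix x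
  show "0 \<le> x \<bullet> ((F0 A Q P - F1 A B Q R P) *v x)"
    using F1_le_J[OF assms(2,3), of x A B Q 0] F0_J[of x A Q P B R]
    by (simp add: matrix_vector_mult_diff_rdistrib inner_diff_right)
qed

lemma psd_add: "psd X \<Longrightarrow> psd Y \<Longrightarrow> psd (X + Y)"
  unfolding psd_def by (simp add: tr_add matrix_vector_mult_add_rdistrib inner_add_right)

lemma loewner_psd: "psd P2 \<Longrightarrow> loewner_ge P1 P2 \<Longrightarrow> psd P1"
  unfolding loewner_ge_def using psd_add[of "P1 - P2" P2] by simp

lemma loewner_trans: "loewner_ge X Y \<Longrightarrow> loewner_ge Y Z \<Longrightarrow> loewner_ge X Z"
  unfolding loewner_ge_def using psd_add[of "X - Y" "Y - Z"] by simp

lemma Jc_mono: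
  assumes "loewner_ge P1 P2"
  shows "Jc A B Q R P2 x u \<le> Jc A B Q R P1 x u"
proof -
  have "0 \<le> (A *v x + B *v u) \<bullet> ((P1 - P2) *v (A *v x + B *v u))"
    using assms unfolding loewner_ge_def psd_def by blast
  then show ?thesis unfolding Jc_def
    by (simp add: matrix_vector_mult_diff_rdistrib inner_diff_right)
qed

lemma F1_mono:
  assumes "psd Q" "psd P2" "pd R" "loewner_ge P1 P2"
  shows "loewner_ge (F1 A B Q R P1) (F1 A B Q R P2)"
  unfolding loewner_ge_def psd_def
proof (intro conjI allI)
  have p1: "psd P1" by (rule loewner_psd[OF assms(2,4)])
  show "transpose (F1 A B Q R P1 - F1 A B Q R P2) = F1 A B Q R P1 - F1 A B Q R P2"
    using F1_sym[OF assms(1,2,3)] F1_sym[OF assms(1) p1 assms(3)] by (simp add: tr_diff)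
  fix x
  obtain u where u: "x \<bullet> (F1 A B Q R P1 *v x) = Jc A B Q R P1 x u"
    using F1_eq_J[OF p1 assms(3)] by blast
  have "x \<bullet> (F1 A B Q R P2 *v x) \<le> Jc A B Q R P2 x u" by (rule F1_le_J[OF assms(2,3)])
  also have "\<dots> \<le> Jc A B Q R P1 x u" by (rule Jc_mono[OF assms(4)])
  finally show "0 \<le> x \<bullet> ((F1 A B Q R P1 - F1 A B Q R P2) *v x)"
    using u by (simp add: matrix_vector_mult_diff_rdistrib inner_diff_right)
qed

lemma F0_mono:
  assumes "psd Q" "psd P2" "loewner_ge P1 P2"
  shows "loewner_ge (F0 A Q P1) (F0 A Q P2)"
  unfolding loewner_ge_def psd_def
proof (intro conjI allI)
  have p1: "psd P1" by (rule loewner_psd[OF assms(2,3)])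
  show "transpose (F0 A Q P1 - F0 A Q P2) = F0 A Q P1 - F0 A Q P2"
    using F0_sym[OF assms(1,2)] F0_sym[OF assms(1) p1] by (simp add: tr_diff)
  fix x :: "real^'a"
  show "0 \<le> x \<bullet> ((F0 A Q P1 - F0 A Q P2) *v x)"
    using F0_J[of x A Q P1 "0::real^'a^'a" "0::real^'a^'a"] F0_J[of x A Q P2 "0::real^'a^'a" "0::real^'a^'a"]
      Jc_mono[OF assms(3), of A "0::real^'a^'a" Q 0 x 0]
    by (simp add: matrix_vector_mult_diff_rdistrib inner_diff_right)
qed

lemma rb_step:
  "riccati_back A B Q R Qf \<sigma> tf (Suc k) =
   (if \<sigma> (tf - Suc k) then F1 A B Q R (riccati_back A B Q R Qf \<sigma> tf k)
    else F0 A Q (riccati_back A B Q R Qf \<sigma> tf k))"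
  by (simp add: F0_def F1_def Let_def)

lemma psd_zero: "psd (0::real^'n^'n)"
  unfolding psd_def by (simp add: transpose_def vec_eq_iff)

theorem mainTheorem4:
  fixes A :: "real^'n^'n" and B :: "real^'m^'n" and Q Qf :: "real^'n^'n" and R :: "real^'m^'m"
    and tf :: nat and \<sigma>1 \<sigma>2 :: "nat \<Rightarrow> bool"
  assumes "psd Q" and "pd R" and "pd Qf"
    and "sig_le \<sigma>1 \<sigma>2"
  shows "loewner_ge (P_sig A B Q R Qf \<sigma>1 tf 0) (P_sig A B Q R Qf \<sigma>2 tf 0)"
proof -
  have psdQf: "psd Qf" using assms(3) unfolding pd_def psd_def
    by (metis inner_zero_left less_imp_le order_refl)
  have "psd (riccati_back A B Q R Qf \<sigma>2 tf k) \<and>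
        loewner_ge (riccati_back A B Q R Qf \<sigma>1 tf k) (riccati_back A B Q R Qf \<sigma>2 tf k)" for k
  proof (induction k)
    case 0
    then show ?case using psdQf psd_zero by (simp add: loewner_ge_def)
  next
    case (Suc k)
    let ?P1 = "riccati_back A B Q R Qf \<sigma>1 tf k"
    let ?P2 = "riccati_back A B Q R Qf \<sigma>2 tf k"
    let ?t = "tf - Suc k"
    have p2: "psd ?P2" and le: "loewner_ge ?P1 ?P2" using Suc by auto
    have p1: "psd ?P1" by (rule loewner_psd[OF p2 le])
    have ps2: "psd (riccati_back A B Q R Qf \<sigma>2 tf (Suc k))"
      unfolding rb_step
      using F1_psd[OF assms(1) p2 assms(2)]
        loewner_psd[OF F1_psd[OF assms(1) p2 assms(2)] F0_ge_F1[OF assms(1) p2 assms(2)]]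
      by simp
    have "loewner_ge (riccati_back A B Q R Qf \<sigma>1 tf (Suc k)) (riccati_back A B Q R Qf \<sigma>2 tf (Suc k))"
    proof (cases "\<sigma>1 ?t")
      case True
      then have "\<sigma>2 ?t" using assms(4) by (simp add: sig_le_def)
      then show ?thesis unfolding rb_step using True F1_mono[OF assms(1) p2 assms(2) le] by simp
    next
      case False
      show ?thesis
      proof (cases "\<sigma>2 ?t")
        case True
        then show ?thesis unfolding rb_step using False
          loewner_trans[OF F0_mono[OF assms(1) p2 le] F0_ge_F1[OF assms(1) p2 assms(2)]] by simp
      next
        case F2: False
        then show ?thesis unfolding rb_step using False F0_mono[OF assms(1) p2 le] by simp
      qed
    qed
    with ps2 show ?case by simp
  qed
  then show ?thesis unfolding P_sig_def by simp
qed

end
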